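(* Let $T>0$ and let $f:\Omega\times[0,T]\times\mathbb{R}\times\mathbb{R}^d\to\mathbb{R}$ satisfy $f(\cdot,y,z)\in L^2_{\mathcal{F}}(0,T)$ for each $(y,z)$ and $|f(t,y,z)-f(t,y',z')|\le\mu(|y-y'|+|z-z'|)$. For $(t,y,z)\in[0,T]\times\mathbb{R}\times\mathbb{R}^d$ let $(Y^{t,y,z}_s)_{s\in[t,T]}$ solve $Y^{t,y,z}_s=y-\int_t^sf(r,Y^{t,y,z}_r,z)dr+z(B_s-B_t)$. Suppose that for each $(t,y,z)\in[0,T]\times\mathbb{R}\times\mathbb{R}^d$, $$f(\omega,r,Y^{t,y,z}_r,z)\ge0\ (\text{resp. }=0)\quad dr\times dP\text{-a.s. on }[t,T]\times\Omega.$$ Then for each $(y,z)\in\mathbb{R}\times\mathbb{R}^d$, $f(\omega,t,y,z)\ge0$ (resp. $=0$) $dt\times dP$-a.s. on $[0,T]\times\Omega$.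
   Context: $(\Omega,\mathcal{F},P)$ carries a $d$-dimensional Brownian motion $B$ with filtration $\mathcal{F}_t=\sigma\{B_s:s\le t\}$; $L^2_{\mathcal{F}}(0,T)$ denotes real predictable processes $\phi$ with $E\int_0^T|\phi_s|^2ds<\infty$. *)

theory Defs
  imports "HOL-Probability.Probability"
begin

definition brownian_motion :: "'a measure \<Rightarrow> (real \<Rightarrow> 'a \<Rightarrow> real ^ 'd) \<Rightarrow> bool" where
  "brownian_motion M B \<longleftrightarrow>
     prob_space M \<and>
     (\<forall>t. B t \<in> borel_measurable M) \<and>
     (\<forall>\<omega>\<in>space M. B 0 \<omega> = 0) \<and>
     (\<forall>\<omega>\<in>space M. continuous_on {0..} (\<lambda>t. B t \<omega>)) \<and>
     (\<forall>(ts :: nat \<Rightarrow> real) n. 0 \<le> ts 0 \<and> (\<forall>i<n. ts i \<le> ts (Suc i)) \<longrightarrow>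
        prob_space.indep_vars M (\<lambda>_. borel) (\<lambda>i \<omega>. B (ts (Suc i)) \<omega> - B (ts i) \<omega>) {..<n}) \<and>
     (\<forall>s t. 0 \<le> s \<and> s < t \<longrightarrow>
        prob_space.indep_vars M (\<lambda>_. borel) (\<lambda>i \<omega>. (B t \<omega> - B s \<omega>) $ i) UNIV \<and>
        (\<forall>i. distributed M lborel (\<lambda>\<omega>. (B t \<omega> - B s \<omega>) $ i)
                (\<lambda>x. ennreal (normal_density 0 (sqrt (t - s)) x))))"

definition bm_filtration :: "'a measure \<Rightarrow> (real \<Rightarrow> 'a \<Rightarrow> real ^ 'd) \<Rightarrow> real \<Rightarrow> 'a set set" where
  "bm_filtration M B t =
     sigma_sets (space M) (\<Union>s\<in>{0..t}. {B s -` A \<inter> space M | A. A \<in> sets borel})"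

definition predictable_sets :: "'a measure \<Rightarrow> (real \<Rightarrow> 'a \<Rightarrow> real ^ 'd) \<Rightarrow> real \<Rightarrow> (real \<times> 'a) set set" where
  "predictable_sets M B T =
     sigma_sets ({0..T} \<times> space M)
       ({{0} \<times> A | A. A \<in> bm_filtration M B 0} \<union>
        {{s<..u} \<times> A | s u A. 0 \<le> s \<and> s \<le> u \<and> u \<le> T \<and> A \<in> bm_filtration M B s})"

definition L2F :: "'a measure \<Rightarrow> (real \<Rightarrow> 'a \<Rightarrow> real ^ 'd) \<Rightarrow> real \<Rightarrow> ('a \<Rightarrow> real \<Rightarrow> real) \<Rightarrow> bool" where
  "L2F M B T \<phi> \<longleftrightarrow>
     (\<forall>A\<in>sets (borel :: real measure).
        {p \<in> {0..T} \<times> space M. \<phi> (snd p) (fst p) \<in> A} \<in> predictable_sets M B T) \<and>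
     (\<integral>\<^sup>+ p. indicator ({0..T} \<times> space M) p * ennreal ((\<phi> (snd p) (fst p))\<^sup>2) \<partial>(lborel \<Otimes>\<^sub>M M)) < \<infinity>"

definition solves_ode :: "'a measure \<Rightarrow> (real \<Rightarrow> 'a \<Rightarrow> real ^ 'd) \<Rightarrow> real \<Rightarrow>
    ('a \<Rightarrow> real \<Rightarrow> real \<Rightarrow> real ^ 'd \<Rightarrow> real) \<Rightarrow> real \<Rightarrow> real \<Rightarrow> real ^ 'd \<Rightarrow> (real \<Rightarrow> 'a \<Rightarrow> real) \<Rightarrow> bool" where
  "solves_ode M B T f t y z Y \<longleftrightarrow>
     (AE \<omega> in M. \<forall>s\<in>{t..T}.
        set_integrable lborel {t..s} (\<lambda>r. f \<omega> r (Y r \<omega>) z) \<and>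
        Y s \<omega> = y - (LINT r:{t..s}|lborel. f \<omega> r (Y r \<omega>) z) + z \<bullet> (B s \<omega> - B t \<omega>))"

end

theory Submission
  imports Defs
begin


lemma key:
  fixes g :: "real \<Rightarrow> real \<Rightarrow> real" and Bw :: "real \<Rightarrow> real ^ 'd"
    and Yq :: "real \<Rightarrow> real \<Rightarrow> real" and z :: "real ^ 'd"
  assumes mu: "\<mu> \<ge> 0"
    and Lip: "\<And>u a b. u \<in> {0..T} \<Longrightarrow> \<bar>g u a - g u b\<bar> \<le> \<mu> * \<bar>a - b\<bar>"
    and cont: "continuous_on {0..} Bw"
    and intg: "(\<lambda>u. \<bar>g u y\<bar>) integrable_on {0..T}"
    and ode: "\<And>q s. q \<in> \<rat> \<inter> {0..T} \<Longrightarrow> s \<in> {q..T} \<Longrightarrow>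
        set_integrable lborel {q..s} (\<lambda>u. g u (Yq q u)) \<and>
        Yq q s = y - integral {q..s} (\<lambda>u. g u (Yq q u)) + z \<bullet> (Bw s - Bw q)"
    and r: "r \<in> {0..T}" and eps: "\<epsilon> > 0"
  shows "\<exists>q\<in>\<rat> \<inter> {0..T}. q \<le> r \<and> \<bar>g r y - g r (Yq q r)\<bar> \<le> \<epsilon>"
proof -
  define m where "m = norm z"
  have m0: "m \<ge> 0" by (simp add: m_def)
  define e where "e = \<epsilon> / (2 * \<mu> * (1 + 2*m) + 1)"
  have e0: "e > 0" unfolding e_def using eps mu m0 by (intro divide_pos_pos) (auto intro: add_nonneg_pos)
  have efin: "\<mu> * (2 * e * (1 + 2*m)) \<le> \<epsilon>"
  proof -
    have "\<mu> * (2 * e * (1 + 2*m)) = e * (2 * \<mu> * (1 + 2*m))" by (simp add: algebra_simps)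
    also have "\<dots> \<le> e * (2 * \<mu> * (1 + 2*m) + 1)" using e0 by simp
    also have "\<dots> = \<epsilon>"
    proof -
      have "2 * \<mu> * (1 + 2*m) + 1 > 0" using mu m0 by (simp add: add_nonneg_pos)
      then show ?thesis unfolding e_def by simp
    qed
    finally show ?thesis .
  qed
  define G where "G x = integral {0..x} (\<lambda>u. \<bar>g u y\<bar>)" for x
  have Gc: "continuous_on {0..T} G" unfolding G_def by (rule indefinite_integral_continuous_1[OF intg])
  obtain d1 where d1: "d1 > 0" "\<And>x. x \<in> {0..T} \<Longrightarrow> dist x r < d1 \<Longrightarrow> dist (G x) (G r) < e"
    using Gc r e0 unfolding continuous_on_iff by meson
  obtain d2 where d2: "d2 > 0" "\<And>x. x \<in> {0..} \<Longrightarrow> dist x r < d2 \<Longrightarrow> dist (Bw x) (Bw r) < e"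
    using cont r e0 unfolding continuous_on_iff by (metis atLeastAtMost_iff atLeast_iff)
  define \<delta> where "\<delta> = min (min d1 d2) (1 / (2 * \<mu> + 1))"
  have dpos: "\<delta> > 0" unfolding \<delta>_def using d1 d2 mu by simp
  have mud: "\<mu> * \<delta> \<le> 1/2"
  proof -
    have "\<mu> * \<delta> \<le> \<mu> * (1 / (2 * \<mu> + 1))" using mu unfolding \<delta>_def by (intro mult_left_mono) auto
    also have "\<dots> \<le> 1/2" using mu by (simp add: field_simps)
    finally show ?thesis .
  qed
  obtain q where q: "q \<in> \<rat>" "0 \<le> q" "q \<le> r" "r - q < \<delta>"
  proof (cases "r = 0")
    case True then show ?thesis using that[of 0] dpos by auto
  next
    case False
    then have "max 0 (r - \<delta>) < r" using r dpos by auto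
    then obtain q where "q \<in> \<rat>" "max 0 (r - \<delta>) < q" "q < r" using Rats_dense_in_real by blast
    then show ?thesis using that[of q] by auto
  qed
  have qD: "q \<in> \<rat> \<inter> {0..T}" using q r by auto
  have dqr1: "dist q r < d1" and dqr2: "dist q r < d2" using q unfolding \<delta>_def dist_real_def by auto
  define gY where "gY u = g u (Yq q u)" for u
  define \<phi> where "\<phi> s = \<bar>Yq q s - y\<bar>" for s
  have a_small: "integral {q..r} (\<lambda>u. \<bar>g u y\<bar>) < e"
  proof -
    have "G q + integral {q..r} (\<lambda>u. \<bar>g u y\<bar>) = G r" unfolding G_def
      by (rule Henstock_Kurzweil_Integration.integral_combine) (use q r intg in \<open>auto intro: integrable_on_subinterval\<close>)
    moreover have "dist (G q) (G r) < e" using d1(2)[of q] qD dqr1 by auto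
    ultimately show ?thesis by (simp add: dist_real_def)
  qed
  have Bsmall: "norm (Bw s - Bw q) < 2 * e" if "s \<in> {q..r}" for s
  proof -
    have "dist s r < d2" using that q unfolding \<delta>_def dist_real_def by auto
    then have "dist (Bw s) (Bw r) < e" using d2(2)[of s] that q by auto
    moreover have "dist (Bw q) (Bw r) < e" using d2(2)[of q] q dqr2 by auto
    ultimately show ?thesis by (smt (verit) dist_norm dist_commute dist_triangle)
  qed
  have gYint: "set_integrable lborel {q..s} gY" if "s \<in> {q..r}" for s
    using ode[OF qD, of s] that r unfolding gY_def by auto
  have absint: "(\<lambda>u. \<bar>gY u\<bar>) integrable_on {q..s}" if "s \<in> {q..r}" for s
    using set_borel_integral_eq_integral(1)[OF set_integrable_abs[OF gYint[OF that]]] .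
  have phi_le: "\<phi> s \<le> integral {q..s} (\<lambda>u. \<bar>gY u\<bar>) + m * (2 * e)" if s: "s \<in> {q..r}" for s
  proof -
    have eq: "Yq q s - y = - integral {q..s} gY + z \<bullet> (Bw s - Bw q)"
      using ode[OF qD, of s] s r unfolding gY_def by auto
    have "\<bar>integral {q..s} gY\<bar> \<le> integral {q..s} (\<lambda>u. \<bar>gY u\<bar>)"
      using integral_norm_bound_integral[of gY "{q..s}" "\<lambda>u. \<bar>gY u\<bar>"]
        set_borel_integral_eq_integral(1)[OF gYint[OF s]] absint[OF s] by auto
    moreover have "\<bar>z \<bullet> (Bw s - Bw q)\<bar> \<le> m * (2 * e)"
      using Cauchy_Schwarz_ineq2[of z "Bw s - Bw q"] Bsmall[OF s] m0 unfolding m_def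
      by (smt (verit) mult_left_mono)
    ultimately show ?thesis unfolding \<phi>_def eq by linarith
  qed
  have int_mono: "integral {q..s} (\<lambda>u. \<bar>gY u\<bar>) \<le> integral {q..r} (\<lambda>u. \<bar>gY u\<bar>)" if s: "s \<in> {q..r}" for s
  proof -
    have "integral {q..s} (\<lambda>u. \<bar>gY u\<bar>) + integral {s..r} (\<lambda>u. \<bar>gY u\<bar>) = integral {q..r} (\<lambda>u. \<bar>gY u\<bar>)"
      by (rule Henstock_Kurzweil_Integration.integral_combine) (use s absint[of r] q in auto)
    moreover have "integral {s..r} (\<lambda>u. \<bar>gY u\<bar>) \<ge> 0"
      by (rule integral_nonneg) (use s absint[of r] q in \<open>auto intro: integrable_on_subinterval\<close>)
    ultimately show ?thesis by linarith
  qed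
  have bdd: "bdd_above (\<phi> ` {q..r})"
    by (rule bdd_aboveI2[where M="integral {q..r} (\<lambda>u. \<bar>gY u\<bar>) + m * (2 * e)"])
       (use phi_le int_mono in fastforce)
  define S where "S = (SUP s\<in>{q..r}. \<phi> s)"
  have phiS: "\<phi> s \<le> S" if "s \<in> {q..r}" for s
    unfolding S_def using bdd that by (rule cSUP_upper2) auto
  have S0: "S \<ge> 0" using phiS[of r] q unfolding \<phi>_def by fastforce
  have main: "\<phi> s \<le> e + S / 2 + m * (2 * e)" if s: "s \<in> {q..r}" for s
  proof -
    have sub: "{q..s} \<subseteq> {0..T}" using s q r by auto
    have i1: "(\<lambda>u. \<bar>g u y\<bar>) integrable_on {q..s}" using intg sub by (rule integrable_on_subinterval)
    have "integral {q..s} (\<lambda>u. \<bar>gY u\<bar>) \<le> integral {q..s} (\<lambda>u. \<bar>g u y\<bar> + \<mu> * S)"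
    proof (rule integral_le[OF absint[OF s]])
      show "(\<lambda>u. \<bar>g u y\<bar> + \<mu> * S) integrable_on {q..s}" using i1 by (intro integrable_add) auto
      fix u assume u: "u \<in> {q..s}"
      have "\<bar>g u (Yq q u) - g u y\<bar> \<le> \<mu> * \<bar>Yq q u - y\<bar>" using Lip u sub by auto
      moreover have "\<phi> u \<le> S" using phiS u s by auto
      ultimately have "\<bar>g u (Yq q u) - g u y\<bar> \<le> \<mu> * S" unfolding \<phi>_def
        by (smt (verit) mu mult_left_mono)
      then show "\<bar>gY u\<bar> \<le> \<bar>g u y\<bar> + \<mu> * S" unfolding gY_def by linarith
    qed
    also have "\<dots> = integral {q..s} (\<lambda>u. \<bar>g u y\<bar>) + \<mu> * S * (s - q)"
      using i1 s by (subst integral_add) auto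
    also have "\<dots> \<le> e + S / 2"
    proof -
      have "integral {q..s} (\<lambda>u. \<bar>g u y\<bar>) \<le> integral {q..r} (\<lambda>u. \<bar>g u y\<bar>)"
      proof -
        have "integral {q..s} (\<lambda>u. \<bar>g u y\<bar>) + integral {s..r} (\<lambda>u. \<bar>g u y\<bar>) = integral {q..r} (\<lambda>u. \<bar>g u y\<bar>)"
          by (rule Henstock_Kurzweil_Integration.integral_combine) (use s q r intg in \<open>auto intro: integrable_on_subinterval\<close>)
        moreover have "integral {s..r} (\<lambda>u. \<bar>g u y\<bar>) \<ge> 0"
          by (rule integral_nonneg) (use s q r intg in \<open>auto intro: integrable_on_subinterval\<close>)
        ultimately show ?thesis by linarith
      qed
      moreover have "\<mu> * S * (s - q) \<le> S / 2"
      proof -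
        have "\<mu> * S * (s - q) \<le> \<mu> * S * \<delta>" using s q mu S0 by (intro mult_left_mono) auto
        also have "\<dots> = S * (\<mu> * \<delta>)" by simp
        also have "\<dots> \<le> S * (1/2)" using mud S0 by (intro mult_left_mono) auto
        finally show ?thesis by simp
      qed
      ultimately show ?thesis using a_small by linarith
    qed
    finally show ?thesis using phi_le[OF s] by linarith
  qed
  have "S \<le> e + S / 2 + m * (2 * e)"
    unfolding S_def using q by (intro cSUP_least) (auto intro: main[unfolded S_def])
  then have S_le: "S \<le> 2 * e * (1 + 2 * m)" by (simp add: algebra_simps)
  have "\<bar>g r y - g r (Yq q r)\<bar> \<le> \<mu> * \<phi> r" using Lip[OF r] unfolding \<phi>_def by (simp add: abs_minus_commute)
  also have "\<dots> \<le> \<mu> * (2 * e * (1 + 2 * m))"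
    using phiS[of r] q S_le mu by (intro mult_left_mono) auto
  also have "\<dots> \<le> \<epsilon>" by (rule efin)
  finally show ?thesis using qD q by blast
qed



lemma sigma_sets_into_sets:
  assumes "\<Omega> \<in> sets N" "G \<subseteq> sets N"
  shows "sigma_sets \<Omega> G \<subseteq> sets N"
proof
  fix x assume "x \<in> sigma_sets \<Omega> G"
  then show "x \<in> sets N"
    by induct (use assms in auto)
qed

lemma bm_filtration_sub:
  assumes BM: "brownian_motion M B"
  shows "bm_filtration M B s \<subseteq> sets M"
proof -
  have Bm: "B u \<in> borel_measurable M" for u using BM unfolding brownian_motion_def by auto
  show ?thesis unfolding bm_filtration_def
    by (rule sets.sigma_sets_subset) (use Bm measurable_sets in blast)
qed

lemma predictable_sub:
  assumes BM: "brownian_motion M B"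
  shows "predictable_sets M B T \<subseteq> sets (lborel \<Otimes>\<^sub>M M)"
  unfolding predictable_sets_def
proof (rule sigma_sets_into_sets)
  show "{0..T} \<times> space M \<in> sets (lborel \<Otimes>\<^sub>M M)" by (intro pair_measureI) auto
  show "{{0} \<times> A |A. A \<in> bm_filtration M B 0} \<union>
    {{s<..u} \<times> A |s u A. 0 \<le> s \<and> s \<le> u \<and> u \<le> T \<and> A \<in> bm_filtration M B s}
    \<subseteq> sets (lborel \<Otimes>\<^sub>M M)"
    using bm_filtration_sub[OF BM] by (auto intro!: pair_measureI)
qed

lemma L2F_measurable:
  assumes BM: "brownian_motion M B" and L: "L2F M B T \<phi>"
  shows "(\<lambda>p. if p \<in> {0..T} \<times> space M then \<phi> (snd p) (fst p) else 0) \<in> borel_measurable (lborel \<Otimes>\<^sub>M M)"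
proof (rule measurableI)
  fix A :: "real set" assume A: "A \<in> sets borel"
  let ?H = "\<lambda>p. if p \<in> {0..T} \<times> space M then \<phi> (snd p) (fst p) else 0"
  have E: "{p \<in> {0..T} \<times> space M. \<phi> (snd p) (fst p) \<in> A} \<in> sets (lborel \<Otimes>\<^sub>M M)"
    using L A predictable_sub[OF BM] unfolding L2F_def by auto
  have R: "{0..T} \<times> space M \<in> sets (lborel \<Otimes>\<^sub>M M)" by (intro pair_measureI) auto
  have eq: "?H -` A \<inter> space (lborel \<Otimes>\<^sub>M M) =
     {p \<in> {0..T} \<times> space M. \<phi> (snd p) (fst p) \<in> A} \<union>
     (if 0 \<in> A then space (lborel \<Otimes>\<^sub>M M) - {0..T} \<times> space M else {})"
    by (auto simp: space_pair_measure split: if_splits)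
  show "?H -` A \<inter> space (lborel \<Otimes>\<^sub>M M) \<in> sets (lborel \<Otimes>\<^sub>M M)"
    unfolding eq using E R sets.top[of "lborel \<Otimes>\<^sub>M M"] by (auto intro!: sets.Un sets.Diff)
qed auto

lemma abs_le_sq: "\<bar>x::real\<bar> \<le> 1 + x\<^sup>2"
proof (cases "\<bar>x\<bar> \<le> 1")
  case True then show ?thesis using zero_le_power2[of x] by linarith
next
  case False
  have "\<bar>x\<bar> * 1 \<le> \<bar>x\<bar> * \<bar>x\<bar>" using False by (intro mult_left_mono) auto
  then show ?thesis by (simp add: power2_eq_square)
qed

lemma AE_lift:
  assumes P: "prob_space M" and ae: "AE \<omega> in M. P \<omega>"
  shows "AE p in (lborel::real measure) \<Otimes>\<^sub>M M. P (snd p)"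
proof -
  interpret prob_space M by (rule P)
  obtain N where N: "N \<in> null_sets M" "{\<omega> \<in> space M. \<not> P \<omega>} \<subseteq> N" using ae unfolding eventually_ae_filter by blast
  have "emeasure ((lborel::real measure) \<Otimes>\<^sub>M M) (UNIV \<times> N) = emeasure lborel (UNIV::real set) * emeasure M N"
    using N by (intro emeasure_pair_measure_Times) auto
  then have "UNIV \<times> N \<in> null_sets ((lborel::real measure) \<Otimes>\<^sub>M M)"
    using N by (auto simp: null_sets_def intro!: pair_measureI)
  moreover have "{p \<in> space ((lborel::real measure) \<Otimes>\<^sub>M M). \<not> P (snd p)} \<subseteq> UNIV \<times> N"
    using N by (auto simp: space_pair_measure)
  ultimately show ?thesis by (rule AE_I')
qed

lemma AE_integrable_slice:
  fixes H :: "real \<times> 'a \<Rightarrow> real"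
  assumes P: "prob_space M" and Hm: "H \<in> borel_measurable (lborel \<Otimes>\<^sub>M M)"
    and fin: "(\<integral>\<^sup>+ p. ennreal ((H p)\<^sup>2) \<partial>(lborel \<Otimes>\<^sub>M M)) < \<infinity>"
    and supp: "\<And>u \<omega>. u \<notin> {0..T} \<Longrightarrow> H (u, \<omega>) = 0"
  shows "AE \<omega> in M. integrable lborel (\<lambda>u. H (u, \<omega>))"
proof -
  interpret prob_space M by (rule P)
  interpret PS: pair_sigma_finite lborel M by unfold_locales
  have m2: "(\<lambda>p. ennreal ((H p)\<^sup>2)) \<in> borel_measurable (lborel \<Otimes>\<^sub>M M)" using Hm by measurable
  have "(\<integral>\<^sup>+ \<omega>. (\<integral>\<^sup>+ u. ennreal ((H (u, \<omega>))\<^sup>2) \<partial>lborel) \<partial>M) = (\<integral>\<^sup>+ p. ennreal ((H p)\<^sup>2) \<partial>(lborel \<Otimes>\<^sub>M M))"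
    by (rule PS.nn_integral_snd[OF m2])
  then have fin2: "(\<integral>\<^sup>+ \<omega>. (\<integral>\<^sup>+ u. ennreal ((H (u, \<omega>))\<^sup>2) \<partial>lborel) \<partial>M) \<noteq> \<infinity>" using fin by simp
  have m3: "(\<lambda>\<omega>. \<integral>\<^sup>+ u. ennreal ((H (u, \<omega>))\<^sup>2) \<partial>lborel) \<in> borel_measurable M"
  proof -
    have "(\<lambda>(\<omega>, u). ennreal ((H (u, \<omega>))\<^sup>2)) \<in> borel_measurable (M \<Otimes>\<^sub>M lborel)"
      using m2 measurable_pair_swap_iff[of "\<lambda>p. ennreal ((H p)\<^sup>2)" lborel M] by (simp add: case_prod_beta')
    then show ?thesis by measurable
  qed
  have "AE \<omega> in M. (\<integral>\<^sup>+ u. ennreal ((H (u, \<omega>))\<^sup>2) \<partial>lborel) \<noteq> \<infinity>"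
    by (rule nn_integral_PInf_AE[OF m3 fin2])
  then show ?thesis
  proof (rule AE_mp, intro AE_I2 impI)
    fix \<omega> assume \<omega>: "\<omega> \<in> space M" and f: "(\<integral>\<^sup>+ u. ennreal ((H (u, \<omega>))\<^sup>2) \<partial>lborel) \<noteq> \<infinity>"
    have hm: "(\<lambda>u. H (u, \<omega>)) \<in> borel_measurable lborel"
      using measurable_comp[OF measurable_Pair2'[OF \<omega>] Hm] by (simp add: comp_def)
    show "integrable lborel (\<lambda>u. H (u, \<omega>))"
    proof (rule integrableI_bounded[OF hm])
      have "(\<integral>\<^sup>+ u. ennreal (norm (H (u, \<omega>))) \<partial>lborel) \<le>
            (\<integral>\<^sup>+ u. (indicator {0..T} u + ennreal ((H (u, \<omega>))\<^sup>2)) \<partial>lborel)"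
      proof (rule nn_integral_mono)
        fix u
        show "ennreal (norm (H (u, \<omega>))) \<le> indicator {0..T} u + ennreal ((H (u, \<omega>))\<^sup>2)"
        proof (cases "u \<in> {0..T}")
          case True
          have "\<bar>H (u, \<omega>)\<bar> \<le> 1 + (H (u, \<omega>))\<^sup>2" by (rule abs_le_sq)
          then have "ennreal \<bar>H (u, \<omega>)\<bar> \<le> ennreal (1 + (H (u, \<omega>))\<^sup>2)" by (rule ennreal_leI)
          moreover have "ennreal (1 + (H (u, \<omega>))\<^sup>2) = 1 + ennreal ((H (u, \<omega>))\<^sup>2)"
            by (subst ennreal_plus) auto
          ultimately show ?thesis using True by simp
        next
          case False then show ?thesis using supp by simp
        qed
      qed
      also have "\<dots> = (\<integral>\<^sup>+ u. indicator {0..T} u \<partial>lborel) + (\<integral>\<^sup>+ u. ennreal ((H (u, \<omega>))\<^sup>2) \<partial>lborel)"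
        by (rule nn_integral_add) (use hm in auto)
      also have "\<dots> < \<infinity>" using f by (simp add: less_top emeasure_lborel_Icc_eq)
      finally show "(\<integral>\<^sup>+ u. ennreal (norm (H (u, \<omega>))) \<partial>lborel) < \<infinity>" .
    qed
  qed
qed



lemma main_AE:
  fixes M :: "'a measure" and B :: "real \<Rightarrow> 'a \<Rightarrow> real ^ 'd"
    and f :: "'a \<Rightarrow> real \<Rightarrow> real \<Rightarrow> real ^ 'd \<Rightarrow> real"
    and Y :: "real \<Rightarrow> real \<Rightarrow> real ^ 'd \<Rightarrow> real \<Rightarrow> 'a \<Rightarrow> real"
    and T \<mu> :: real
  assumes BM: "brownian_motion M B"
    and T_pos: "T > 0"
    and f_L2: "\<And>y z. L2F M B T (\<lambda>\<omega> t. f \<omega> t y z)"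
    and f_Lip: "\<And>\<omega> t y y' z z'. \<omega> \<in> space M \<Longrightarrow> t \<in> {0..T} \<Longrightarrow>
                  \<bar>f \<omega> t y z - f \<omega> t y' z'\<bar> \<le> \<mu> * (\<bar>y - y'\<bar> + norm (z - z'))"
    and Y_sol: "\<And>t y z. t \<in> {0..T} \<Longrightarrow> solves_ode M B T f t y z (Y t y z)"
  shows "AE p in lborel \<Otimes>\<^sub>M M. fst p \<in> {0..T} \<longrightarrow> (\<forall>\<epsilon>>0. \<exists>q\<in>\<rat> \<inter> {0..T}. q \<le> fst p \<and>
            \<bar>f (snd p) (fst p) y z - f (snd p) (fst p) (Y q y z (fst p) (snd p)) z\<bar> \<le> \<epsilon>)"
proof -
  have P: "prob_space M" using BM unfolding brownian_motion_def by auto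
  then interpret prob_space M .
  have Bc: "\<And>\<omega>. \<omega> \<in> space M \<Longrightarrow> continuous_on {0..} (\<lambda>t. B t \<omega>)"
    using BM unfolding brownian_motion_def by auto
  obtain \<omega>0 where \<omega>0: "\<omega>0 \<in> space M" using not_empty by blast
  have "\<bar>f \<omega>0 0 0 z - f \<omega>0 0 1 z\<bar> \<le> \<mu> * (\<bar>0 - 1\<bar> + norm (z - z))"
    using f_Lip[OF \<omega>0, of 0 0 z 1 z] T_pos by simp
  moreover have "\<mu> * (\<bar>0 - 1\<bar> + norm (z - z)) = \<mu>" by simp
  ultimately have mu: "\<mu> \<ge> 0" using abs_ge_zero[of "f \<omega>0 0 0 z - f \<omega>0 0 1 z"] by linarith
  define H where "H p = (if p \<in> {0..T} \<times> space M then f (snd p) (fst p) y z else 0)" for p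
  have Hm: "H \<in> borel_measurable (lborel \<Otimes>\<^sub>M M)"
    unfolding H_def using L2F_measurable[OF BM f_L2[of y z]] by simp
  have fin: "(\<integral>\<^sup>+ p. ennreal ((H p)\<^sup>2) \<partial>(lborel \<Otimes>\<^sub>M M)) < \<infinity>"
  proof -
    have "(\<integral>\<^sup>+ p. ennreal ((H p)\<^sup>2) \<partial>(lborel \<Otimes>\<^sub>M M)) =
      (\<integral>\<^sup>+ p. indicator ({0..T} \<times> space M) p * ennreal ((f (snd p) (fst p) y z)\<^sup>2) \<partial>(lborel \<Otimes>\<^sub>M M))"
      by (rule nn_integral_cong) (auto simp: H_def indicator_def)
    then show ?thesis using f_L2[of y z] unfolding L2F_def by simp
  qed
  have supp: "\<And>u \<omega>. u \<notin> {0..T} \<Longrightarrow> H (u, \<omega>) = 0" unfolding H_def by auto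
  have AE1: "AE \<omega> in M. integrable lborel (\<lambda>u. H (u, \<omega>))"
    by (rule AE_integrable_slice[OF P Hm fin supp])
  have AE2: "AE \<omega> in M. \<forall>q\<in>\<rat> \<inter> {0..T}. \<forall>s\<in>{q..T}.
        set_integrable lborel {q..s} (\<lambda>r. f \<omega> r (Y q y z r \<omega>) z) \<and>
        Y q y z s \<omega> = y - (LINT r:{q..s}|lborel. f \<omega> r (Y q y z r \<omega>) z) + z \<bullet> (B s \<omega> - B q \<omega>)"
  proof (rule AE_ball_countable[THEN iffD2])
    show "countable (\<rat> \<inter> {0..T})" by (intro countable_Int1 countable_rat)
    show "\<forall>q\<in>\<rat> \<inter> {0..T}. AE \<omega> in M. \<forall>s\<in>{q..T}.
        set_integrable lborel {q..s} (\<lambda>r. f \<omega> r (Y q y z r \<omega>) z) \<and>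
        Y q y z s \<omega> = y - (LINT r:{q..s}|lborel. f \<omega> r (Y q y z r \<omega>) z) + z \<bullet> (B s \<omega> - B q \<omega>)"
    proof
      fix q assume q: "q \<in> \<rat> \<inter> {0..T}"
      show "AE \<omega> in M. \<forall>s\<in>{q..T}.
        set_integrable lborel {q..s} (\<lambda>r. f \<omega> r (Y q y z r \<omega>) z) \<and>
        Y q y z s \<omega> = y - (LINT r:{q..s}|lborel. f \<omega> r (Y q y z r \<omega>) z) + z \<bullet> (B s \<omega> - B q \<omega>)"
        using Y_sol[of q y z] q unfolding solves_ode_def by simp
    qed
  qed
  have AE3: "AE \<omega> in M. \<forall>r\<in>{0..T}. \<forall>\<epsilon>>0. \<exists>q\<in>\<rat> \<inter> {0..T}. q \<le> r \<and>
            \<bar>f \<omega> r y z - f \<omega> r (Y q y z r \<omega>) z\<bar> \<le> \<epsilon>"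
    using AE1 AE2 AE_space
  proof (eventually_elim)
    case (elim \<omega>)
    have \<omega>: "\<omega> \<in> space M" by (rule elim(3))
    show ?case
    proof -
      have si: "set_integrable lborel {0..T} (\<lambda>u. f \<omega> u y z)"
        unfolding set_integrable_def
      proof -
        have "(\<lambda>u. H (u, \<omega>)) = (\<lambda>x. indicator {0..T} x *\<^sub>R f \<omega> x y z)"
          by (auto simp: H_def \<omega> indicator_def fun_eq_iff)
        then show "integrable lborel (\<lambda>x. indicator {0..T} x *\<^sub>R f \<omega> x y z)" using elim(1) by simp
      qed
      have intg: "(\<lambda>u. \<bar>f \<omega> u y z\<bar>) integrable_on {0..T}"
        using set_borel_integral_eq_integral(1)[OF set_integrable_abs[OF si]] .
      show ?thesis
      proof (intro ballI allI impI)
        fix r \<epsilon> :: real assume r: "r \<in> {0..T}" and e: "\<epsilon> > 0"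
        show "\<exists>q\<in>\<rat> \<inter> {0..T}. q \<le> r \<and> \<bar>f \<omega> r y z - f \<omega> r (Y q y z r \<omega>) z\<bar> \<le> \<epsilon>"
        proof (rule key[where g="\<lambda>u a. f \<omega> u a z" and Bw="\<lambda>s. B s \<omega>" and Yq="\<lambda>q s. Y q y z s \<omega>"
              and \<mu>=\<mu> and T=T and z=z, OF mu _ Bc[OF \<omega>] intg _ r e])
          fix u a b :: real assume "u \<in> {0..T}"
          then show "\<bar>f \<omega> u a z - f \<omega> u b z\<bar> \<le> \<mu> * \<bar>a - b\<bar>" using f_Lip[OF \<omega>, of u a z b z] by simp
        next
          fix q s assume q: "q \<in> \<rat> \<inter> {0..T}" and s: "s \<in> {q..T}"
          have si2: "set_integrable lborel {q..s} (\<lambda>r. f \<omega> r (Y q y z r \<omega>) z)"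
            and eq: "Y q y z s \<omega> = y - (LINT r:{q..s}|lborel. f \<omega> r (Y q y z r \<omega>) z) + z \<bullet> (B s \<omega> - B q \<omega>)"
            using elim(2) q s by auto
          show "set_integrable lborel {q..s} (\<lambda>u. f \<omega> u (Y q y z u \<omega>) z) \<and>
            Y q y z s \<omega> = y - integral {q..s} (\<lambda>u. f \<omega> u (Y q y z u \<omega>) z) + z \<bullet> (B s \<omega> - B q \<omega>)"
            using si2 eq set_borel_integral_eq_integral(2)[OF si2] by simp
        qed
      qed
    qed
  qed
  show ?thesis
    using AE_lift[OF P AE3] by (rule eventually_mono) blast
qed

theorem lemma5p3:
  fixes M :: "'a measure" and B :: "real \<Rightarrow> 'a \<Rightarrow> real ^ 'd"
    and f :: "'a \<Rightarrow> real \<Rightarrow> real \<Rightarrow> real ^ 'd \<Rightarrow> real"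
    and Y :: "real \<Rightarrow> real \<Rightarrow> real ^ 'd \<Rightarrow> real \<Rightarrow> 'a \<Rightarrow> real"
    and T \<mu> :: real
  assumes BM: "brownian_motion M B"
    and T_pos: "T > 0"
    and f_L2: "\<And>y z. L2F M B T (\<lambda>\<omega> t. f \<omega> t y z)"
    and f_Lip: "\<And>\<omega> t y y' z z'. \<omega> \<in> space M \<Longrightarrow> t \<in> {0..T} \<Longrightarrow>
                  \<bar>f \<omega> t y z - f \<omega> t y' z'\<bar> \<le> \<mu> * (\<bar>y - y'\<bar> + norm (z - z'))"
    and Y_sol: "\<And>t y z. t \<in> {0..T} \<Longrightarrow> solves_ode M B T f t y z (Y t y z)"
  shows "((\<forall>t y z. t \<in> {0..T} \<longrightarrow>
             (AE p in lborel \<Otimes>\<^sub>M M. fst p \<in> {t..T} \<longrightarrow> f (snd p) (fst p) (Y t y z (fst p) (snd p)) z \<ge> 0))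
          \<longrightarrow> (\<forall>y z. AE p in lborel \<Otimes>\<^sub>M M. fst p \<in> {0..T} \<longrightarrow> f (snd p) (fst p) y z \<ge> 0))
       \<and> ((\<forall>t y z. t \<in> {0..T} \<longrightarrow>
             (AE p in lborel \<Otimes>\<^sub>M M. fst p \<in> {t..T} \<longrightarrow> f (snd p) (fst p) (Y t y z (fst p) (snd p)) z = 0))
          \<longrightarrow> (\<forall>y z. AE p in lborel \<Otimes>\<^sub>M M. fst p \<in> {0..T} \<longrightarrow> f (snd p) (fst p) y z = 0))"
proof -
  have both: "AE p in lborel \<Otimes>\<^sub>M M. fst p \<in> {0..T} \<longrightarrow> (\<forall>\<epsilon>>0. \<exists>q\<in>\<rat> \<inter> {0..T}. q \<le> fst p \<and>
            \<bar>f (snd p) (fst p) y z - f (snd p) (fst p) (Y q y z (fst p) (snd p)) z\<bar> \<le> \<epsilon>)" for y z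
    by (rule main_AE[OF BM T_pos f_L2 f_Lip Y_sol])
  have cnt: "countable (\<rat> \<inter> {0..T})" by (intro countable_Int1 countable_rat)
  show ?thesis
  proof (intro conjI impI allI)
    fix y z
    assume H: "\<forall>t y z. t \<in> {0..T} \<longrightarrow>
             (AE p in lborel \<Otimes>\<^sub>M M. fst p \<in> {t..T} \<longrightarrow> f (snd p) (fst p) (Y t y z (fst p) (snd p)) z \<ge> 0)"
    have A: "AE p in lborel \<Otimes>\<^sub>M M. \<forall>q\<in>\<rat> \<inter> {0..T}. fst p \<in> {q..T} \<longrightarrow> f (snd p) (fst p) (Y q y z (fst p) (snd p)) z \<ge> 0"
      using H by (subst AE_ball_countable[OF cnt]) blast
    show "AE p in lborel \<Otimes>\<^sub>M M. fst p \<in> {0..T} \<longrightarrow> f (snd p) (fst p) y z \<ge> 0"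
      using A both[of y z]
    proof eventually_elim
      case (elim p)
      show ?case
      proof
        assume r: "fst p \<in> {0..T}"
        show "f (snd p) (fst p) y z \<ge> 0"
        proof (rule ccontr)
          assume neg: "\<not> f (snd p) (fst p) y z \<ge> 0"
          then obtain q where q: "q \<in> \<rat> \<inter> {0..T}" "q \<le> fst p"
            "\<bar>f (snd p) (fst p) y z - f (snd p) (fst p) (Y q y z (fst p) (snd p)) z\<bar> \<le> - f (snd p) (fst p) y z / 2"
            using elim(2) r by (metis neg_0_less_iff_less half_gt_zero not_le neg_less_0_iff_less divide_minus_left)
          then have "f (snd p) (fst p) (Y q y z (fst p) (snd p)) z \<ge> 0" using elim(1) r by auto
          then show False using q(3) neg by linarith
        qed
      qed
    qed
  next
    fix y z
    assume H: "\<forall>t y z. t \<in> {0..T} \<longrightarrow>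
             (AE p in lborel \<Otimes>\<^sub>M M. fst p \<in> {t..T} \<longrightarrow> f (snd p) (fst p) (Y t y z (fst p) (snd p)) z = 0)"
    have A: "AE p in lborel \<Otimes>\<^sub>M M. \<forall>q\<in>\<rat> \<inter> {0..T}. fst p \<in> {q..T} \<longrightarrow> f (snd p) (fst p) (Y q y z (fst p) (snd p)) z = 0"
      using H by (subst AE_ball_countable[OF cnt]) blast
    show "AE p in lborel \<Otimes>\<^sub>M M. fst p \<in> {0..T} \<longrightarrow> f (snd p) (fst p) y z = 0"
      using A both[of y z]
    proof eventually_elim
      case (elim p)
      show ?case
      proof
        assume r: "fst p \<in> {0..T}"
        show "f (snd p) (fst p) y z = 0"
        proof (rule ccontr)
          assume neg: "f (snd p) (fst p) y z \<noteq> 0"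
          then have pos: "\<bar>f (snd p) (fst p) y z\<bar> / 2 > 0" by simp
          then obtain q where q: "q \<in> \<rat> \<inter> {0..T}" "q \<le> fst p"
            "\<bar>f (snd p) (fst p) y z - f (snd p) (fst p) (Y q y z (fst p) (snd p)) z\<bar> \<le> \<bar>f (snd p) (fst p) y z\<bar> / 2"
            using elim(2) r by blast
          then have "f (snd p) (fst p) (Y q y z (fst p) (snd p)) z = 0" using elim(1) r by auto
          then show False using q(3) pos by linarith
        qed
      qed
    qed
  qed
qed

end
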